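(* Let $N,K\ge1$ be integers and $\mathcal X\subseteq\{\pm1\}^N$. Any function $f:\mathcal X\to\{\pm1\}$ that depends on at most $K$ coordinates is a $(K,2,3,\xi)$-PTF for $\xi=\frac1{K2^{(K+2)/2}}$. As a result, in the setting described in the context, $(\mathcal L,\mathbf e)$ is an $(r,K,2,3,\xi)$-hierarchy for $\mathbf f^*$.
   Context: $\|p\|_{\mathrm{co}}$ is the Euclidean norm of the coefficient vector of $p$. For $\mathcal Y\subseteq[-1,1]^s$, $\mathcal B_r(\mathbf x)=\{\tilde{\mathbf x}\in[-1,1]^s:\|\mathbf x-\tilde{\mathbf x}\|_\infty\le r\}$, and $f:\mathcal Y\to\{\pm1\}$ is a $(K,M,B,\xi)$-PTF if there is a polynomial $p$ of degree $\le K$, $\|p\|_{\mathrm{co}}\le M$, with $B\ge p(\tilde{\mathbf x})f(\mathbf x)\ge1$ for all $\mathbf x\in\mathcal Y$, $\tilde{\mathbf x}\in\mathcal B_\xi(\mathbf x)$. Setting for the second sentence: $\mathcal X\subseteq\{\pm1\}^d$, $G$ a finite set, $\mathbf e=(e_1,\ldots,e_w):G\to G^w$ with $e_1(g)=g$; for $\vec{\mathbf x}=(\mathbf x_g)_{g\in G}$, $E_g(\vec{\mathbf x})=(\mathbf x_{e_1(g)}|\cdots|\mathbf x_{e_w(g)})$ (concatenation). $\mathbf f^*:\mathcal X^G\to\{\pm1\}^{n,G}$ has coordinates $f^*_{j,g}$; $\mathcal L=\{L_1\subseteq\cdots\subseteq L_r=[n]\}$. Assume: for $j\in L_1$ there is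 $\tilde f_j:\{\pm1\}^{dw}\to\{\pm1\}$ depending on at most $K$ coordinates with $f^*_{j,g}(\vec{\mathbf x})=\tilde f_j(E_g(\vec{\mathbf x}))$; for $i\ge2$ and $j\in L_i$ there is $\tilde f_j:\{\pm1\}^{wn}\to\{\pm1\}$ depending on at most $K$ coordinates, all in $\{kn+l:0\le k\le w-1,\ l\in L_{i-1}\}$, with $f^*_{j,g}(\vec{\mathbf x})=\tilde f_j(E_g(\mathbf f^*(\vec{\mathbf x})))$, for all $\vec{\mathbf x}\in\mathcal X^G$, $g\in G$. An $(r,K,M,B,\xi)$-hierarchy $(\mathcal L,\mathbf e)$ means: each $f^*_{j,g}$, $j\in L_1$, equals $\tilde f_j(E_g(\vec{\mathbf x}))$ for a $(K,M,B,\xi)$-PTF $\tilde f_j$ on $\mathcal X^w$, and for $i\ge2$, $j\in L_i$, equals $\tilde f_j(E_g(\mathbf f^*_{L_{i-1}}(\vec{\mathbf x})))$ for a $(K,M,B,\xi)$-PTF $\tilde f_j$ on $\{\pm1\}^{|L_{i-1}|w}$, where $\mathbf f^*_{L}$ keeps the coordinates in $L$. *)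

theory Defs
  imports Complex_Main
begin

text \<open>Points of [-1,1]^s and of {+-1}^s are real lists of length s (0-indexed coordinates).\<close>

definition sign_cube :: "nat \<Rightarrow> real list set" where
  "sign_cube m = {x. length x = m \<and> set x \<subseteq> {-1, 1}}"

definition unit_cube :: "nat \<Rightarrow> real list set" where
  "unit_cube s = {x. length x = s \<and> (\<forall>i<s. \<bar>x ! i\<bar> \<le> 1)}"

definition cube_ball :: "real \<Rightarrow> real list \<Rightarrow> real list set" where
  "cube_ball r x = {y. length y = length x \<and>
      (\<forall>i<length x. \<bar>y ! i\<bar> \<le> 1 \<and> \<bar>x ! i - y ! i\<bar> \<le> r)}"

text \<open>A real polynomial in s variables, given by its coefficient function on exponent
  vectors alpha (monomial prod_i x_i^(alpha i)); finitely many nonzero coefficients,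
  all monomials in variables < s and of total degree \<le> K.\<close>
definition is_poly :: "nat \<Rightarrow> nat \<Rightarrow> ((nat \<Rightarrow> nat) \<Rightarrow> real) \<Rightarrow> bool" where
  "is_poly s K c \<longleftrightarrow> finite {\<alpha>. c \<alpha> \<noteq> 0} \<and>
     (\<forall>\<alpha>. c \<alpha> \<noteq> 0 \<longrightarrow> (\<forall>i\<ge>s. \<alpha> i = 0) \<and> (\<Sum>i<s. \<alpha> i) \<le> K)"

definition poly_eval :: "nat \<Rightarrow> ((nat \<Rightarrow> nat) \<Rightarrow> real) \<Rightarrow> real list \<Rightarrow> real" where
  "poly_eval s c x = (\<Sum>\<alpha>\<in>{\<alpha>. c \<alpha> \<noteq> 0}. c \<alpha> * (\<Prod>i<s. (x ! i) ^ (\<alpha> i)))"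

definition coef_norm :: "((nat \<Rightarrow> nat) \<Rightarrow> real) \<Rightarrow> real" where
  "coef_norm c = sqrt (\<Sum>\<alpha>\<in>{\<alpha>. c \<alpha> \<noteq> 0}. (c \<alpha>)^2)"

definition is_PTF :: "nat \<Rightarrow> nat \<Rightarrow> real \<Rightarrow> real \<Rightarrow> real \<Rightarrow> real list set
    \<Rightarrow> (real list \<Rightarrow> real) \<Rightarrow> bool" where
  "is_PTF s K M B \<xi> Y f \<longleftrightarrow> Y \<subseteq> unit_cube s \<and> (\<forall>x\<in>Y. f x \<in> {-1, 1}) \<and>
     (\<exists>c. is_poly s K c \<and> coef_norm c \<le> M \<and>
        (\<forall>x\<in>Y. \<forall>y\<in>cube_ball \<xi> x.
            1 \<le> poly_eval s c y * f x \<and> poly_eval s c y * f x \<le> B))"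

definition depends_only_on :: "nat set \<Rightarrow> real list set \<Rightarrow> (real list \<Rightarrow> real) \<Rightarrow> bool" where
  "depends_only_on S Y f \<longleftrightarrow>
     (\<forall>x\<in>Y. \<forall>y\<in>Y. (\<forall>i\<in>S. x ! i = y ! i) \<longrightarrow> f x = f y)"

definition depends_on_at_most :: "nat \<Rightarrow> nat \<Rightarrow> real list set \<Rightarrow> (real list \<Rightarrow> real) \<Rightarrow> bool" where
  "depends_on_at_most s K Y f \<longleftrightarrow>
     (\<exists>S. S \<subseteq> {..<s} \<and> card S \<le> K \<and> depends_only_on S Y f)"

definition xi_of :: "nat \<Rightarrow> real" where
  "xi_of K = 1 / (real K * 2 powr ((real K + 2) / 2))"

text \<open>E_g: concatenation of the blocks indexed by e_1(g),...,e_w(g) (here e g 0, ..., e g (w-1)).\<close>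
definition Eg :: "nat \<Rightarrow> ('g \<Rightarrow> nat \<Rightarrow> 'g) \<Rightarrow> ('g \<Rightarrow> 'a list) \<Rightarrow> 'g \<Rightarrow> 'a list" where
  "Eg w e xv g = concat (map (\<lambda>k. xv (e g k)) [0..<w])"

text \<open>Output f*_L(x): for each g', the vector (f*_{l,g'}(x))_{l \<in> L} in increasing order of l.
  f* is given as fstar xv j g (j \<in> {0..<n}).\<close>
definition fout :: "(('g \<Rightarrow> real list) \<Rightarrow> nat \<Rightarrow> 'g \<Rightarrow> real) \<Rightarrow> nat set
    \<Rightarrow> ('g \<Rightarrow> real list) \<Rightarrow> 'g \<Rightarrow> real list" where
  "fout fstar L xv g' = map (\<lambda>l. fstar xv l g') (sorted_list_of_set L)"

text \<open>X^w as the set of concatenations of w elements of X.\<close>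
definition list_power :: "real list set \<Rightarrow> nat \<Rightarrow> real list set" where
  "list_power X w = {concat xs | xs. length xs = w \<and> set xs \<subseteq> X}"

end

theory Submission
  imports Defs "HOL-Library.FuncSet"
begin


lemma orth_prod:
  assumes "finite S" "a \<in> PiE S (\<lambda>_. {-1,1::real})" "b \<in> PiE S (\<lambda>_. {-1,1::real})"
  shows "(\<Prod>i\<in>S. a i * b i + 1) = (if a = b then 2 ^ card S else 0)"
proof (cases "a = b")
  case True
  have "(\<Prod>i\<in>S. a i * b i + 1) = (\<Prod>i\<in>S. 2)"
    using assms(2) True by (intro prod.cong) (auto simp: PiE_iff)
  then show ?thesis using True by simp
next
  case False
  then obtain i where "i \<in> S" "a i \<noteq> b i"
    using assms(2,3) by (metis PiE_ext)
  moreover have "a i = -1 \<or> a i = 1" "b i = -1 \<or> b i = 1" using assms(2,3) \<open>i \<in> S\<close> by (auto simp: PiE_iff)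
  ultimately have "a i * b i + 1 = 0" by auto
  then have "(\<Prod>i\<in>S. a i * b i + 1) = 0" using \<open>i \<in> S\<close> assms(1) by (metis prod_zero)
  then show ?thesis using False by simp
qed

lemma sum_weights:
  assumes "finite S"
  shows "(\<Sum>a\<in>PiE S (\<lambda>_. {-1,1::real}). \<Prod>i\<in>S. a i * z i + 1) = 2 ^ card S"
proof -
  have "(\<Sum>a\<in>PiE S (\<lambda>_. {-1,1::real}). \<Prod>i\<in>S. a i * z i + 1) = (\<Prod>i\<in>S. \<Sum>s\<in>{-1,1::real}. s * z i + 1)"
    using prod_sum_PiE[of S "\<lambda>_. {-1,1::real}" "\<lambda>i s. s * z i + 1"] assms by simp
  also have "\<dots> = (\<Prod>i\<in>S. 2)" by (intro prod.cong) auto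
  finally show ?thesis by simp
qed

lemma xi_bound:
  assumes "K \<ge> 1"
  shows "xi_of K \<ge> 0" "real K * xi_of K \<le> 1/2"
proof -
  have p: "2 powr ((real K + 2) / 2) \<ge> 2"
  proof -
    have "(2::real) powr 1 \<le> 2 powr ((real K + 2) / 2)" by (intro powr_mono) auto
    then show ?thesis by simp
  qed
  show "xi_of K \<ge> 0" unfolding xi_of_def by simp
  have "real K * xi_of K = 1 / 2 powr ((real K + 2) / 2)" unfolding xi_of_def using assms by simp
  also have "\<dots> \<le> 1/2" using p by (simp add: divide_simps)
  finally show "real K * xi_of K \<le> 1/2" .
qed

lemma part1:
  fixes N K :: nat and X :: "real list set" and f :: "real list \<Rightarrow> real"
  assumes K1: "K \<ge> 1" and XS: "X \<subseteq> sign_cube N" and fv: "\<forall>x\<in>X. f x \<in> {-1,1}"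
    and dep: "depends_on_at_most N K X f"
  shows "is_PTF N K 2 3 (xi_of K) X f"
proof -
  obtain S where SN: "S \<subseteq> {..<N}" and cS: "card S \<le> K" and dS: "depends_only_on S X f"
    using dep unfolding depends_on_at_most_def by blast
  have finS: "finite S" using SN finite_subset by blast
  define k where "k = card S"
  define A where "A = PiE S (\<lambda>_. {-1,1::real})"
  have finA: "finite A" unfolding A_def by (simp add: finS finite_PiE)
  define F where "F a = (if \<exists>x\<in>X. \<forall>i\<in>S. x!i = a i then f (SOME x. x\<in>X \<and> (\<forall>i\<in>S. x!i = a i)) else 1)"
    for a :: "nat \<Rightarrow> real"
  have Fv: "F a = -1 \<or> F a = 1" for a
  proof (cases "\<exists>x\<in>X. \<forall>i\<in>S. x!i = a i")
    case True
    then obtain x0 where "x0\<in>X \<and> (\<forall>i\<in>S. x0!i = a i)" by blast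
    then have "(SOME x. x\<in>X \<and> (\<forall>i\<in>S. x!i = a i)) \<in> X \<and> True" by (rule someI2) simp
    then show ?thesis using True fv unfolding F_def by auto
  next
    case False
    show ?thesis unfolding F_def by (rule disjI2, rule if_not_P[OF False])
  qed
  have Fsq: "F a * F a = 1" for a using Fv[of a] by auto
  have Fx: "F (restrict (\<lambda>i. x!i) S) = f x" if xX: "x \<in> X" for x
  proof -
    have ex: "\<exists>x'\<in>X. \<forall>i\<in>S. x'!i = restrict (\<lambda>i. x!i) S i"
      using xX by (intro bexI[of _ x]) simp_all
    define x' where "x' = (SOME x'. x'\<in>X \<and> (\<forall>i\<in>S. x'!i = restrict (\<lambda>i. x!i) S i))"
    have "x' \<in> X \<and> (\<forall>i\<in>S. x'!i = restrict (\<lambda>i. x!i) S i)" unfolding x'_def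
      using ex unfolding Bex_def by (rule someI_ex)
    then have "f x' = f x" using dS[unfolded depends_only_on_def, rule_format, of x' x] xX by simp
    moreover have "F (restrict (\<lambda>i. x!i) S) = f x'" unfolding F_def x'_def by (rule if_P[OF ex])
    ultimately show ?thesis by simp
  qed
  have a0A: "restrict (\<lambda>i. x!i) S \<in> A" if xX: "x \<in> X" for x
  proof -
    have "x \<in> sign_cube N" using XS xX by (rule subsetD)
    then have "length x = N" "set x \<subseteq> {-1,1}" unfolding sign_cube_def by simp_all
    then have "x!i \<in> {-1,1}" if "i \<in> S" for i
    proof -
      have "i \<in> {..<N}" using SN that by (rule subsetD)
      then have "i < length x" using \<open>length x = N\<close> by simp
      then have "x!i \<in> set x" by (rule nth_mem)
      then show ?thesis using \<open>set x \<subseteq> {-1,1}\<close> by (rule rev_subsetD)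
    qed
    then show ?thesis unfolding A_def restrict_PiE_iff by simp
  qed
  define C where "C T = 2 / 2^k * (\<Sum>a\<in>A. F a * (\<Prod>i\<in>T. a i))" for T :: "nat set"
  define ind where "ind T = (\<lambda>i. if i \<in> T then 1 else 0 :: nat)" for T :: "nat set"
  have indinv: "{i. ind T i = 1} = T" for T unfolding ind_def by simp
  have indinj: "inj_on ind (Pow S)"
  proof (rule inj_onI)
    fix T T' assume "ind T = ind T'"
    then have "{i. ind T i = 1} = {i. ind T' i = 1}" by simp
    then show "T = T'" by (simp only: indinv)
  qed
  define c where "c \<alpha> = (if \<alpha> \<in> ind ` Pow S then C {i. \<alpha> i = 1} else 0)" for \<alpha>
  have cind: "c (ind T) = C T" if "T \<subseteq> S" for T
  proof -
    have "ind T \<in> ind ` Pow S" using that by blast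
    then have "c (ind T) = C {i. ind T i = 1}" unfolding c_def by (rule if_P)
    then show ?thesis by (simp only: indinv)
  qed
  have sub1: "\<alpha> \<in> ind ` Pow S" if "c \<alpha> \<noteq> 0" for \<alpha>
    using that unfolding c_def by (cases "\<alpha> \<in> ind ` Pow S") simp_all
  have sub: "{\<alpha>. c \<alpha> \<noteq> 0} \<subseteq> ind ` Pow S" using sub1 by blast
  have finc: "finite {\<alpha>. c \<alpha> \<noteq> 0}" by (rule finite_subset[OF sub]) (simp add: finS)
  have sumc: "(\<Sum>\<alpha>\<in>{\<alpha>. c \<alpha> \<noteq> 0}. c \<alpha> * Z \<alpha>) = (\<Sum>T\<in>Pow S. C T * Z (ind T))" for Z
  proof -
    have "(\<Sum>\<alpha>\<in>{\<alpha>. c \<alpha> \<noteq> 0}. c \<alpha> * Z \<alpha>) = (\<Sum>\<alpha>\<in>ind ` Pow S. c \<alpha> * Z \<alpha>)"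
      apply (rule sum.mono_neutral_left)
      using sub finS apply simp_all
      done
    also have "\<dots> = (\<Sum>T\<in>Pow S. c (ind T) * Z (ind T))" by (simp add: sum.reindex[OF indinj])
    also have "\<dots> = (\<Sum>T\<in>Pow S. C T * Z (ind T))" using cind by (intro sum.cong) auto
    finally show ?thesis .
  qed
  have mono: "(\<Prod>i<N. z!i ^ ind T i) = (\<Prod>i\<in>T. z!i)" if "T \<subseteq> S" for T and z :: "real list"
  proof -
    have "(\<Prod>i<N. z!i ^ ind T i) = (\<Prod>i<N. if i \<in> T then z!i else 1)"
      by (intro prod.cong) (auto simp: ind_def)
    also have "\<dots> = (\<Prod>i\<in>{..<N} \<inter> T. z!i)" by (simp add: prod.inter_restrict)
    also have "{..<N} \<inter> T = T" using that SN by auto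
    finally show ?thesis .
  qed
  have Pf: "(\<Sum>T\<in>Pow S. C T * (\<Prod>i\<in>T. z i)) = 2/2^k * (\<Sum>a\<in>A. F a * (\<Prod>i\<in>S. a i * z i + 1))"
    for z :: "nat \<Rightarrow> real"
  proof -
    define cc :: real where "cc = 2/2^k"
    have "(\<Sum>T\<in>Pow S. C T * (\<Prod>i\<in>T. z i)) = (\<Sum>T\<in>Pow S. cc * (\<Sum>a\<in>A. F a * (\<Prod>i\<in>T. a i * z i)))"
      by (rule sum.cong[OF refl]) (simp add: C_def cc_def sum_distrib_right prod.distrib mult.assoc)
    also have "\<dots> = cc * (\<Sum>T\<in>Pow S. \<Sum>a\<in>A. F a * (\<Prod>i\<in>T. a i * z i))"
      by (rule sum_distrib_left[symmetric])
    also have "\<dots> = cc * (\<Sum>a\<in>A. \<Sum>T\<in>Pow S. F a * (\<Prod>i\<in>T. a i * z i))"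
      by (rule arg_cong[where f = "\<lambda>u. cc * u"], rule sum.swap)
    also have "\<dots> = cc * (\<Sum>a\<in>A. F a * (\<Sum>T\<in>Pow S. (\<Prod>i\<in>T. a i * z i)))"
      by (simp add: sum_distrib_left)
    also have "\<dots> = cc * (\<Sum>a\<in>A. F a * (\<Prod>i\<in>S. a i * z i + 1))"
    proof -
      have "(\<Sum>T\<in>Pow S. (\<Prod>i\<in>T. a i * z i)) = (\<Prod>i\<in>S. a i * z i + 1)" for a :: "nat \<Rightarrow> real"
        using prod_add[OF finS, of "\<lambda>i. a i * z i" "\<lambda>_. 1"] by simp
      then show ?thesis by simp
    qed
    finally show ?thesis unfolding cc_def .
  qed
  have polyA: "(\<forall>i\<ge>N. \<alpha> i = 0) \<and> (\<Sum>i<N. \<alpha> i) \<le> K" if ca: "c \<alpha> \<noteq> 0" for \<alpha>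
  proof -
    obtain T where TS: "T \<subseteq> S" and aT: "\<alpha> = ind T" using sub1[OF ca] by blast
    have A1: "\<forall>i\<ge>N. \<alpha> i = 0"
    proof (intro allI impI)
      fix i assume "N \<le> i"
      then have "i \<notin> T" using TS SN by auto
      then show "\<alpha> i = 0" unfolding aT ind_def by simp
    qed
    have "(\<Sum>i<N. \<alpha> i) = (\<Sum>i\<in>{..<N} \<inter> T. 1)" unfolding aT ind_def by (subst sum.inter_restrict) simp_all
    also have "{..<N} \<inter> T = T" using TS SN by auto
    also have "(\<Sum>i\<in>T. (1::nat)) = card T" by simp
    also have "card T \<le> card S" using TS finS by (rule card_mono[rotated])
    finally have "(\<Sum>i<N. \<alpha> i) \<le> K" using cS by linarith
    with A1 show ?thesis by blast
  qed
  have poly: "is_poly N K c" unfolding is_poly_def using finc polyA by blast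
  have peval: "poly_eval N c y = 2/2^k * (\<Sum>a\<in>A. F a * (\<Prod>i\<in>S. a i * y!i + 1))" for y
  proof -
    have "poly_eval N c y = (\<Sum>T\<in>Pow S. C T * (\<Prod>i<N. y!i ^ ind T i))"
      unfolding poly_eval_def by (rule sumc)
    also have "\<dots> = (\<Sum>T\<in>Pow S. C T * (\<Prod>i\<in>T. y!i))"
      by (rule sum.cong[OF refl]) (simp add: mono)
    also have "\<dots> = 2/2^k * (\<Sum>a\<in>A. F a * (\<Prod>i\<in>S. a i * y!i + 1))" by (rule Pf)
    finally show ?thesis .
  qed
  have cardA: "card A = 2^k" unfolding A_def k_def using finS by (simp add: card_PiE numeral_2_eq_2)
  have cnorm: "coef_norm c \<le> 2"
  proof -
    define cc :: real where "cc = 2/2^k"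
    have "(\<Sum>\<alpha>\<in>{\<alpha>. c \<alpha> \<noteq> 0}. (c \<alpha>)^2) = (\<Sum>\<alpha>\<in>{\<alpha>. c \<alpha> \<noteq> 0}. c \<alpha> * c \<alpha>)"
      by (simp add: power2_eq_square)
    also have "\<dots> = (\<Sum>T\<in>Pow S. C T * c (ind T))" by (rule sumc)
    also have "\<dots> = (\<Sum>T\<in>Pow S. C T * (cc * (\<Sum>b\<in>A. F b * (\<Prod>i\<in>T. b i))))"
      by (rule sum.cong[OF refl]) (simp add: cind C_def cc_def)
    also have "\<dots> = (\<Sum>T\<in>Pow S. \<Sum>b\<in>A. cc * (F b * (C T * (\<Prod>i\<in>T. b i))))"
      by (rule sum.cong[OF refl]) (simp add: sum_distrib_left algebra_simps)
    also have "\<dots> = (\<Sum>b\<in>A. \<Sum>T\<in>Pow S. cc * (F b * (C T * (\<Prod>i\<in>T. b i))))"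
      by (rule sum.swap)
    also have "\<dots> = (\<Sum>b\<in>A. cc * (F b * (\<Sum>T\<in>Pow S. C T * (\<Prod>i\<in>T. b i))))"
      by (simp add: sum_distrib_left)
    also have "\<dots> = (\<Sum>b\<in>A. cc * (F b * (cc * (\<Sum>a\<in>A. F a * (\<Prod>i\<in>S. a i * b i + 1)))))"
      by (rule sum.cong[OF refl]) (simp add: Pf cc_def)
    also have "\<dots> = (\<Sum>b\<in>A. cc * (F b * (cc * (F b * 2^k))))"
    proof (rule sum.cong[OF refl])
      fix b assume bA: "b \<in> A"
      have "(\<Sum>a\<in>A. F a * (\<Prod>i\<in>S. a i * b i + 1)) = (\<Sum>a\<in>A. if a = b then F a * 2^k else 0)"
      proof (rule sum.cong[OF refl])
        fix a assume aA: "a \<in> A"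
        have "(\<Prod>i\<in>S. a i * b i + 1) = (if a = b then 2^k else 0)"
          using orth_prod[OF finS aA[unfolded A_def] bA[unfolded A_def]] unfolding k_def .
        then show "F a * (\<Prod>i\<in>S. a i * b i + 1) = (if a = b then F a * 2^k else 0)" by simp
      qed
      also have "\<dots> = F b * 2^k" using bA finA by (simp add: sum.delta')
      finally show "cc * (F b * (cc * (\<Sum>a\<in>A. F a * (\<Prod>i\<in>S. a i * b i + 1)))) = cc * (F b * (cc * (F b * 2^k)))"
        by simp
    qed
    also have "\<dots> = (\<Sum>b\<in>A. cc * cc * 2^k)"
    proof (rule sum.cong[OF refl])
      fix b
      have "cc * (F b * (cc * (F b * 2^k))) = cc * cc * 2^k * (F b * F b)" by (simp add: algebra_simps)
      then show "cc * (F b * (cc * (F b * 2^k))) = cc * cc * 2^k" by (simp add: Fsq)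
    qed
    also have "\<dots> = 4" using cardA by (simp add: cc_def power2_eq_square)
    finally have "(\<Sum>\<alpha>\<in>{\<alpha>. c \<alpha> \<noteq> 0}. (c \<alpha>)^2) = 4" .
    then show ?thesis unfolding coef_norm_def by simp
  qed
  have xi: "xi_of K \<ge> 0" "real K * xi_of K \<le> 1/2" using xi_bound K1 by auto
  define \<xi> where "\<xi> = xi_of K"
  have kxi: "real k * \<xi> \<le> 1/2" "\<xi> \<ge> 0"
  proof -
    have "real k \<le> real K" using cS k_def by simp
    then have "real k * \<xi> \<le> real K * \<xi>" using xi \<xi>_def by (simp add: mult_right_mono)
    then show "real k * \<xi> \<le> 1/2" using xi unfolding \<xi>_def by linarith
    show "\<xi> \<ge> 0" using xi \<xi>_def by simp
  qed
  have xi1: "\<xi> \<le> 1"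
  proof -
    have "\<xi> \<le> real K * \<xi>" using K1 kxi(2) by (simp add: mult_le_cancel_right1)
    then show ?thesis using xi unfolding \<xi>_def by linarith
  qed
  have bound: "1 \<le> poly_eval N c y * f x \<and> poly_eval N c y * f x \<le> 3"
    if xX: "x \<in> X" and yB: "y \<in> cube_ball \<xi> x" for x y
  proof -
    have xS: "x \<in> sign_cube N" using XS xX by (rule subsetD)
    have lx: "length x = N" and sx: "set x \<subseteq> {-1,1}"
      using xS unfolding sign_cube_def by simp_all
    have ly: "length y = N" and yb: "\<And>i. i < N \<Longrightarrow> \<bar>y!i\<bar> \<le> 1 \<and> \<bar>x!i - y!i\<bar> \<le> \<xi>"
      using yB lx unfolding cube_ball_def by simp_all
    have xpm: "x!i = -1 \<or> x!i = 1" if "i < N" for i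
    proof -
      have "x!i \<in> set x" using that lx by simp
      then show ?thesis using sx by blast
    qed
    define W where "W a = (\<Prod>i\<in>S. a i * y!i + 1)" for a :: "nat \<Rightarrow> real"
    have Wnn: "W a \<ge> 0" if aA: "a \<in> A" for a
      unfolding W_def
    proof (rule prod_nonneg)
      fix i assume iS: "i \<in> S"
      then have "i < N" using SN by auto
      then have "\<bar>y!i\<bar> \<le> 1" using yb by simp
      moreover have "a i = -1 \<or> a i = 1" using aA iS unfolding A_def by (auto simp: PiE_iff)
      ultimately show "0 \<le> a i * y!i + 1" by auto
    qed
    have Wsum: "(\<Sum>a\<in>A. W a) = 2^k"
      unfolding W_def A_def k_def by (rule sum_weights[OF finS])
    define a0 where "a0 = restrict (\<lambda>i. x!i) S"
    have a0A': "a0 \<in> A" unfolding a0_def using a0A[OF xX] .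
    have Fa0: "F a0 = f x" unfolding a0_def using Fx[OF xX] .
    have fxpm: "f x = -1 \<or> f x = 1" using fv xX by auto
    have W0: "W a0 \<ge> 2^k * (1 - real k * \<xi> / 2)"
    proof -
      have "(\<Prod>i\<in>S. (2 - \<xi>)) \<le> W a0"
        unfolding W_def
      proof (rule prod_mono)
        fix i assume iS: "i \<in> S"
        then have iN: "i < N" using SN by auto
        have ai: "a0 i = x!i" unfolding a0_def using iS by simp
        have d: "\<bar>x!i - y!i\<bar> \<le> \<xi>" using yb iN by simp
        have "2 - \<xi> \<le> x!i * y!i + 1"
        proof (cases "x!i = 1")
          case True
          then show ?thesis using d by (simp add: abs_le_iff)
        next
          case False
          then have "x!i = -1" using xpm[OF iN] by simp
          then show ?thesis using d by (simp add: abs_le_iff)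
        qed
        then show "0 \<le> 2 - \<xi> \<and> 2 - \<xi> \<le> a0 i * y!i + 1" using xi1 ai by simp
      qed
      then have P1: "(2 - \<xi>)^k \<le> W a0" by (simp add: k_def)
      have P2: "(2 - \<xi>)^k = 2^k * (1 + (- \<xi>/2))^k"
      proof -
        have "2 - \<xi> = 2 * (1 + (- \<xi>/2))" by simp
        then show ?thesis by (simp only: power_mult_distrib)
      qed
      have B: "1 + real k * (- \<xi>/2) \<le> (1 + (- \<xi>/2))^k"
        by (rule Bernoulli_inequality) (use xi1 in simp)
      have "2^k * (1 - real k * \<xi> / 2) = 2^k * (1 + real k * (- \<xi>/2))" by simp
      also have "\<dots> \<le> 2^k * (1 + (- \<xi>/2))^k" by (rule mult_left_mono[OF B]) simp
      also have "\<dots> = (2 - \<xi>)^k" using P2 by simp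
      also have "\<dots> \<le> W a0" by (rule P1)
      finally show ?thesis .
    qed
    define V where "V = (\<Sum>a\<in>A. F a * f x * W a)"
    have pe: "poly_eval N c y * f x = 2/2^k * V"
    proof -
      have "(\<Sum>a\<in>A. F a * W a) * f x = V" unfolding V_def sum_distrib_right
        by (rule sum.cong[OF refl]) (simp only: ac_simps)
      then show ?thesis unfolding peval W_def[symmetric] by (simp only: mult.assoc)
    qed
    have Fb: "-1 \<le> F a * f x \<and> F a * f x \<le> 1" for a using Fv[of a] fxpm by auto
    have Vup: "V \<le> 2^k"
    proof -
      have "V \<le> (\<Sum>a\<in>A. W a)" unfolding V_def
      proof (rule sum_mono)
        fix a assume "a \<in> A"
        then have "W a \<ge> 0" by (rule Wnn)
        then show "F a * f x * W a \<le> W a"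
          using mult_right_mono[OF conjunct2[OF Fb[of a]] \<open>W a \<ge> 0\<close>] by simp
      qed
      then show ?thesis using Wsum by simp
    qed
    have Vlow: "V \<ge> 2 * W a0 - 2^k"
    proof -
      have "V = F a0 * f x * W a0 + (\<Sum>a\<in>A - {a0}. F a * f x * W a)"
        unfolding V_def using finA a0A' by (rule sum.remove)
      also have "F a0 * f x = 1" using Fa0 fxpm by auto
      also have "(\<Sum>a\<in>A - {a0}. F a * f x * W a) \<ge> (\<Sum>a\<in>A - {a0}. - W a)"
      proof (rule sum_mono)
        fix a assume "a \<in> A - {a0}"
        then have "W a \<ge> 0" using Wnn by simp
        then show "- W a \<le> F a * f x * W a" using Fb[of a]
          using mult_right_mono[OF conjunct1[OF Fb[of a]] \<open>W a \<ge> 0\<close>] by simp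
      qed
      moreover have "(\<Sum>a\<in>A. W a) = W a0 + (\<Sum>a\<in>A - {a0}. W a)"
        using finA a0A' by (rule sum.remove)
      ultimately show ?thesis using Wsum by (simp add: sum_negf)
    qed
    have k2: "(2::real)^k > 0" by simp
    have "poly_eval N c y * f x \<ge> 1"
    proof -
      have "2 * W a0 - 2^k \<ge> 2^k * (1 - real k * \<xi>)" using W0 by (simp add: algebra_simps)
      then have "V \<ge> 2^k * (1 - real k * \<xi>)" using Vlow by linarith
      then have "2/2^k * V \<ge> 2/2^k * (2^k * (1 - real k * \<xi>))" using k2
        by (intro mult_left_mono) auto
      then have "2/2^k * V \<ge> 2 * (1 - real k * \<xi>)" using k2 by simp
      then have "2 * (1 - real k * \<xi>) \<le> poly_eval N c y * f x" by (simp only: pe)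
      moreover have "2 * (1 - real k * \<xi>) \<ge> 1" using kxi(1) by (simp add: algebra_simps)
      ultimately show ?thesis by (rule order_trans[rotated])
    qed
    moreover have "poly_eval N c y * f x \<le> 3"
    proof -
      have "2/2^k * V \<le> 2/2^k * 2^k" using Vup k2 by (intro mult_left_mono) auto
      then show ?thesis using pe k2 by simp
    qed
    ultimately show ?thesis by simp
  qed
  have Xu: "X \<subseteq> unit_cube N"
  proof
    fix x assume xX: "x \<in> X"
    have xS: "x \<in> sign_cube N" using XS xX by (rule subsetD)
    have lx: "length x = N" and sx: "set x \<subseteq> {-1,1}"
      using xS unfolding sign_cube_def by simp_all
    have "\<bar>x!i\<bar> \<le> 1" if "i < N" for i
    proof -
      have "x!i \<in> set x" using that lx by simp
      then have "x!i \<in> {-1,1}" using sx by (rule subsetD[rotated])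
      then show ?thesis by auto
    qed
    then show "x \<in> unit_cube N" unfolding unit_cube_def using lx by simp
  qed
  have "\<exists>c. is_poly N K c \<and> coef_norm c \<le> 2 \<and>
        (\<forall>x\<in>X. \<forall>y\<in>cube_ball (xi_of K) x.
            1 \<le> poly_eval N c y * f x \<and> poly_eval N c y * f x \<le> 3)"
    using poly cnorm bound unfolding \<xi>_def by blast
  then show ?thesis unfolding is_PTF_def using Xu fv by simp
qed





lemma concat_blocks_len:
  assumes "\<forall>k<w. length (B k) = m"
  shows "length (concat (map B [0..<w])) = w*m"
  using assms by (induction w) auto

lemma concat_blocks_nth:
  assumes "\<forall>k<w. length (B k) = m" "k < w" "t < m"
  shows "concat (map B [0..<w]) ! (k*m+t) = B k ! t"
  using assms
proof (induction w)
  case 0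
  then show ?case by simp
next
  case (Suc w)
  have len: "length (concat (map B [0..<w])) = w*m"
    using Suc.prems(1) by (intro concat_blocks_len) simp
  have eq: "concat (map B [0..<Suc w]) = concat (map B [0..<w]) @ B w" by simp
  show ?case
  proof (cases "k < w")
    case True
    have "k*m + t < w*m"
    proof -
      have "Suc k \<le> w" using True by simp
      then have "Suc k * m \<le> w * m" by (rule mult_le_mono1)
      then show ?thesis using Suc.prems(3) by simp
    qed
    then show ?thesis unfolding eq using len Suc.IH[OF _ True Suc.prems(3)] Suc.prems(1)
      by (simp add: nth_append)
  next
    case False
    then have "k = w" using Suc.prems(2) by simp
    then show ?thesis unfolding eq using len by (simp add: nth_append)
  qed
qed

lemma Eg_len:
  assumes "\<forall>g'. length (xv g') = m"
  shows "length (Eg w e xv g) = w*m"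
  unfolding Eg_def using assms by (intro concat_blocks_len) simp

lemma Eg_nth:
  assumes "\<forall>g'. length (xv g') = m" "k < w" "t < m"
  shows "Eg w e xv g ! (k*m+t) = xv (e g k) ! t"
  unfolding Eg_def using assms by (subst concat_blocks_nth[where m=m]) simp_all

lemma Eg_set:
  assumes "\<forall>g'. set (xv g') \<subseteq> Y"
  shows "set (Eg w e xv g) \<subseteq> Y"
  unfolding Eg_def using assms by auto

lemma Eg_sign:
  assumes "\<forall>g'. xv g' \<in> sign_cube m"
  shows "Eg w e xv g \<in> sign_cube (w*m)"
  using assms Eg_len[of xv m w e g] Eg_set[of xv "{-1,1}" w e g] unfolding sign_cube_def by auto

lemma concat_sign:
  assumes "\<forall>z\<in>set xs. z \<in> sign_cube d"
  shows "concat xs \<in> sign_cube (length xs * d)"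
  using assms by (induction xs) (auto simp: sign_cube_def)

lemma list_power_sub:
  assumes "X \<subseteq> sign_cube d"
  shows "list_power X w \<subseteq> sign_cube (d*w)"
proof
  fix z assume "z \<in> list_power X w"
  then obtain xs where z: "z = concat xs" "length xs = w" "set xs \<subseteq> X" unfolding list_power_def by blast
  then have "\<forall>u\<in>set xs. u \<in> sign_cube d" using assms by blast
  then have "concat xs \<in> sign_cube (length xs * d)" by (rule concat_sign)
  then show "z \<in> sign_cube (d*w)" using z by (simp add: mult.commute)
qed

lemma chain_sub:
  assumes "\<forall>i. Suc i < r \<longrightarrow> Ls ! i \<subseteq> (Ls ! Suc i :: nat set)" "i \<le> j" "j < r"
  shows "Ls ! i \<subseteq> Ls ! j"
  using assms(2,3)
proof (induction j rule: dec_induct)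
  case base
  then show ?case by simp
next
  case (step n)
  then have "Ls ! n \<subseteq> Ls ! Suc n" using assms(1) by simp
  then show ?case using step by simp
qed

lemma reindex_ptf:
  fixes ft :: "real list \<Rightarrow> real" and L S :: "nat set"
  assumes L: "L \<subseteq> {..<n}" and fv: "\<forall>x\<in>sign_cube (w*n). ft x \<in> {-1,1}"
    and SS: "S \<subseteq> {k*n + l | k l. k < w \<and> l \<in> L}" and cS: "card S \<le> K"
    and dS: "depends_only_on S (sign_cube (w*n)) ft"
  shows "\<exists>ft'. (\<forall>z\<in>sign_cube (card L * w). ft' z \<in> {-1,1}) \<and>
      depends_on_at_most (card L * w) K (sign_cube (card L * w)) ft' \<and>
      (\<forall>z\<in>sign_cube (card L * w). \<forall>v\<in>sign_cube (w*n).
         (\<forall>k<w. \<forall>t<card L. z ! (k * card L + t) = v ! (k*n + sorted_list_of_set L ! t))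
         \<longrightarrow> ft' z = ft v)"
proof -
  define m where "m = card L"
  define sl where "sl = sorted_list_of_set L"
  have finL: "finite L" using L finite_subset by blast
  have lsl: "length sl = m" unfolding sl_def m_def by simp
  have ssl: "set sl = L" unfolding sl_def using finL by simp
  define idx where "idx l = (SOME t. t < m \<and> sl ! t = l)" for l
  have idx: "idx l < m \<and> sl ! idx l = l" if "l \<in> L" for l
  proof -
    have "\<exists>t. t < m \<and> sl ! t = l" using that ssl lsl by (metis in_set_conv_nth)
    then show ?thesis unfolding idx_def by (rule someI_ex)
  qed
  define emb where "emb z = map (\<lambda>p. if p mod n \<in> L then z ! (p div n * m + idx (p mod n)) else 1) [0..<w*n]"
    for z :: "real list"
  define ft' where "ft' z = ft (emb z)" for z
  have posb: "p div n * m + idx (p mod n) < m * w" if "p < w*n" "p mod n \<in> L" for p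
  proof -
    have "p div n < w" using that(1) by (simp add: less_mult_imp_div_less)
    then have "Suc (p div n) * m \<le> w * m" by (intro mult_le_mono1) simp
    moreover have "idx (p mod n) < m" using idx[OF that(2)] by simp
    ultimately show ?thesis by (simp add: mult.commute)
  qed
  have embS: "emb z \<in> sign_cube (w*n)" if zS: "z \<in> sign_cube (m*w)" for z
  proof -
    have lz: "length z = m*w" and sz: "set z \<subseteq> {-1,1}" using zS unfolding sign_cube_def by simp_all
    have "emb z ! p \<in> {-1,1}" if "p < w*n" for p
    proof (cases "p mod n \<in> L")
      case True
      then have "p div n * m + idx (p mod n) < length z" using posb[OF that True] lz by simp
      then have "z ! (p div n * m + idx (p mod n)) \<in> set z" by (rule nth_mem)
      then show ?thesis using True that sz unfolding emb_def by auto
    next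
      case False
      then show ?thesis using that unfolding emb_def by simp
    qed
    moreover have le: "length (emb z) = w*n" unfolding emb_def by simp
    ultimately have "set (emb z) \<subseteq> {-1,1}" by (metis in_set_conv_nth subsetI)
    moreover note le
    ultimately show ?thesis unfolding sign_cube_def by simp
  qed
  have embp: "emb z ! p = z ! (k*m + idx l)" if "p = k*n + l" "k < w" "l \<in> L" for z p k l
  proof -
    have ln: "l < n" using that(3) L by auto
    then have "p div n = k" "p mod n = l" using that(1) by simp_all
    moreover have "p < w*n"
    proof -
      have "Suc k * n \<le> w * n" using that(2) by (intro mult_le_mono1) simp
      then show ?thesis using that(1) ln by simp
    qed
    ultimately show ?thesis unfolding emb_def using that(3) by simp
  qed
  define h where "h p = p div n * m + idx (p mod n)" for p
  have hS: "h ` S \<subseteq> {..<m*w}"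
  proof
    fix q assume "q \<in> h ` S"
    then obtain p where pS: "p \<in> S" and q: "q = h p" by blast
    then obtain k l where p: "p = k*n + l" "k < w" "l \<in> L" using SS by blast
    have ln: "l < n" using p(3) L by auto
    then have "p div n = k" "p mod n = l" using p(1) by simp_all
    moreover have "p < w*n"
    proof -
      have "Suc k * n \<le> w * n" using p(2) by (intro mult_le_mono1) simp
      then show ?thesis using p(1) ln by simp
    qed
    ultimately show "q \<in> {..<m*w}" using posb[of p] p(3) q unfolding h_def by simp
  qed
  have finS: "finite S"
  proof (rule finite_subset)
    show "S \<subseteq> {..<w*n}"
    proof
      fix p assume "p \<in> S"
      then obtain k l where p: "p = k*n + l" "k < w" "l \<in> L" using SS by blast
      have ln: "l < n" using p(3) L by auto
      have "Suc k * n \<le> w * n" using p(2) by (intro mult_le_mono1) simp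
      then show "p \<in> {..<w*n}" using p(1) ln by simp
    qed
  qed simp
  have chS: "card (h ` S) \<le> K" using card_image_le[OF finS, of h] cS by linarith
  have dS': "depends_only_on (h ` S) (sign_cube (m*w)) ft'"
    unfolding depends_only_on_def
  proof (intro ballI impI)
    fix z z' assume z: "z \<in> sign_cube (m*w)" and z': "z' \<in> sign_cube (m*w)"
      and agree: "\<forall>i\<in>h ` S. z ! i = z' ! i"
    have "\<forall>p\<in>S. emb z ! p = emb z' ! p"
    proof
      fix p assume pS: "p \<in> S"
      then obtain k l where p: "p = k*n + l" "k < w" "l \<in> L" using SS by blast
      have ln: "l < n" using p(3) L by auto
      then have "p div n = k" "p mod n = l" using p(1) by simp_all
      then have "h p = k*m + idx l" unfolding h_def by simp
      then have "z ! (k*m + idx l) = z' ! (k*m + idx l)" using agree pS by force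
      then show "emb z ! p = emb z' ! p" using embp[OF p] by simp
    qed
    then show "ft' z = ft' z'" unfolding ft'_def using dS embS[OF z] embS[OF z']
      unfolding depends_only_on_def by blast
  qed
  have fv': "\<forall>z\<in>sign_cube (m*w). ft' z \<in> {-1,1}" unfolding ft'_def using embS fv by blast
  have corr: "\<forall>z\<in>sign_cube (m * w). \<forall>v\<in>sign_cube (w*n).
         (\<forall>k<w. \<forall>t<m. z ! (k * m + t) = v ! (k*n + sl ! t)) \<longrightarrow> ft' z = ft v"
  proof (intro ballI impI)
    fix z v assume z: "z \<in> sign_cube (m*w)" and v: "v \<in> sign_cube (w*n)"
      and rel: "\<forall>k<w. \<forall>t<m. z ! (k * m + t) = v ! (k*n + sl ! t)"
    have "\<forall>p\<in>S. emb z ! p = v ! p"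
    proof
      fix p assume pS: "p \<in> S"
      then obtain k l where p: "p = k*n + l" "k < w" "l \<in> L" using SS by blast
      have "emb z ! p = z ! (k*m + idx l)" by (rule embp[OF p])
      also have "\<dots> = v ! (k*n + sl ! idx l)" using rel p(2) idx[OF p(3)] by simp
      also have "\<dots> = v ! p" using idx[OF p(3)] p(1) by simp
      finally show "emb z ! p = v ! p" .
    qed
    then show "ft' z = ft v" unfolding ft'_def using dS embS[OF z] v
      unfolding depends_only_on_def by blast
  qed
  show ?thesis
    apply (rule exI[of _ ft'])
    using fv' dS' chS hS corr unfolding depends_on_at_most_def m_def sl_def by blast
qed


theorem lemma17:
  fixes K :: nat
  assumes K1: "K \<ge> 1"
  shows
   "(\<forall>(N::nat) (X::real list set) (f::real list \<Rightarrow> real).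
       N \<ge> 1 \<longrightarrow> X \<subseteq> sign_cube N \<longrightarrow> (\<forall>x\<in>X. f x \<in> {-1, 1}) \<longrightarrow>
       depends_on_at_most N K X f \<longrightarrow>
       is_PTF N K 2 3 (xi_of K) X f)
    \<and>
    (\<forall>(d::nat) (X::real list set) (w::nat) (e::'g::finite \<Rightarrow> nat \<Rightarrow> 'g) (n::nat)
       (fstar :: ('g \<Rightarrow> real list) \<Rightarrow> nat \<Rightarrow> 'g \<Rightarrow> real) (Ls :: nat set list) (r::nat).
       X \<subseteq> sign_cube d \<longrightarrow> w \<ge> 1 \<longrightarrow> (\<forall>g. e g 0 = g) \<longrightarrow>
       (\<forall>xv. (\<forall>g. xv g \<in> X) \<longrightarrow> (\<forall>j<n. \<forall>g. fstar xv j g \<in> {-1, 1})) \<longrightarrow>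
       r \<ge> 1 \<longrightarrow> length Ls = r \<longrightarrow>
       (\<forall>i. Suc i < r \<longrightarrow> Ls ! i \<subseteq> Ls ! Suc i) \<longrightarrow> Ls ! (r - 1) = {..<n} \<longrightarrow>
       (\<forall>j\<in>Ls ! 0. \<exists>ft. (\<forall>x\<in>sign_cube (d * w). ft x \<in> {-1, 1}) \<and>
            depends_on_at_most (d * w) K (sign_cube (d * w)) ft \<and>
            (\<forall>xv. (\<forall>g. xv g \<in> X) \<longrightarrow> (\<forall>g. fstar xv j g = ft (Eg w e xv g)))) \<longrightarrow>
       (\<forall>i. 1 \<le> i \<longrightarrow> i < r \<longrightarrow> (\<forall>j\<in>Ls ! i. \<exists>ft.
            (\<forall>x\<in>sign_cube (w * n). ft x \<in> {-1, 1}) \<and>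
            (\<exists>S. S \<subseteq> {k * n + l | k l. k < w \<and> l \<in> Ls ! (i - 1)} \<and> card S \<le> K \<and>
                 depends_only_on S (sign_cube (w * n)) ft) \<and>
            (\<forall>xv. (\<forall>g. xv g \<in> X) \<longrightarrow>
                 (\<forall>g. fstar xv j g = ft (Eg w e (fout fstar {..<n} xv) g))))) \<longrightarrow>
       ((\<forall>j\<in>Ls ! 0. \<exists>ft. is_PTF (d * w) K 2 3 (xi_of K) (list_power X w) ft \<and>
            (\<forall>xv. (\<forall>g. xv g \<in> X) \<longrightarrow> (\<forall>g. fstar xv j g = ft (Eg w e xv g))))
        \<and>
        (\<forall>i. 1 \<le> i \<longrightarrow> i < r \<longrightarrow> (\<forall>j\<in>Ls ! i. \<exists>ft.
            is_PTF (card (Ls ! (i - 1)) * w) K 2 3 (xi_of K)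
                   (sign_cube (card (Ls ! (i - 1)) * w)) ft \<and>
            (\<forall>xv. (\<forall>g. xv g \<in> X) \<longrightarrow>
                 (\<forall>g. fstar xv j g = ft (Eg w e (fout fstar (Ls ! (i - 1)) xv) g)))))))"
  proof -
  have A: "\<forall>(N::nat) (X::real list set) (f::real list \<Rightarrow> real).
       N \<ge> 1 \<longrightarrow> X \<subseteq> sign_cube N \<longrightarrow> (\<forall>x\<in>X. f x \<in> {-1, 1}) \<longrightarrow>
       depends_on_at_most N K X f \<longrightarrow>
       is_PTF N K 2 3 (xi_of K) X f"
  proof (intro allI impI)
    fix N :: nat and X :: "real list set" and f :: "real list \<Rightarrow> real"
    assume "N \<ge> 1" "X \<subseteq> sign_cube N" "\<forall>x\<in>X. f x \<in> {-1, 1}" "depends_on_at_most N K X f"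
    then show "is_PTF N K 2 3 (xi_of K) X f" using part1[OF K1] by simp
  qed
  have B: "X \<subseteq> sign_cube d \<longrightarrow> w \<ge> 1 \<longrightarrow> (\<forall>g. e g 0 = g) \<longrightarrow>
       (\<forall>xv. (\<forall>g. xv g \<in> X) \<longrightarrow> (\<forall>j<n. \<forall>g. fstar xv j g \<in> {-1, 1})) \<longrightarrow>
       r \<ge> 1 \<longrightarrow> length Ls = r \<longrightarrow>
       (\<forall>i. Suc i < r \<longrightarrow> Ls ! i \<subseteq> Ls ! Suc i) \<longrightarrow> Ls ! (r - 1) = {..<n} \<longrightarrow>
       (\<forall>j\<in>Ls ! 0. \<exists>ft. (\<forall>x\<in>sign_cube (d * w). ft x \<in> {-1, 1}) \<and>
            depends_on_at_most (d * w) K (sign_cube (d * w)) ft \<and>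
            (\<forall>xv. (\<forall>g. xv g \<in> X) \<longrightarrow> (\<forall>g. fstar xv j g = ft (Eg w e xv g)))) \<longrightarrow>
       (\<forall>i. 1 \<le> i \<longrightarrow> i < r \<longrightarrow> (\<forall>j\<in>Ls ! i. \<exists>ft.
            (\<forall>x\<in>sign_cube (w * n). ft x \<in> {-1, 1}) \<and>
            (\<exists>S. S \<subseteq> {k * n + l | k l. k < w \<and> l \<in> Ls ! (i - 1)} \<and> card S \<le> K \<and>
                 depends_only_on S (sign_cube (w * n)) ft) \<and>
            (\<forall>xv. (\<forall>g. xv g \<in> X) \<longrightarrow>
                 (\<forall>g. fstar xv j g = ft (Eg w e (fout fstar {..<n} xv) g))))) \<longrightarrow>
       ((\<forall>j\<in>Ls ! 0. \<exists>ft. is_PTF (d * w) K 2 3 (xi_of K) (list_power X w) ft \<and>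
            (\<forall>xv. (\<forall>g. xv g \<in> X) \<longrightarrow> (\<forall>g. fstar xv j g = ft (Eg w e xv g))))
        \<and>
        (\<forall>i. 1 \<le> i \<longrightarrow> i < r \<longrightarrow> (\<forall>j\<in>Ls ! i. \<exists>ft.
            is_PTF (card (Ls ! (i - 1)) * w) K 2 3 (xi_of K)
                   (sign_cube (card (Ls ! (i - 1)) * w)) ft \<and>
            (\<forall>xv. (\<forall>g. xv g \<in> X) \<longrightarrow>
                 (\<forall>g. fstar xv j g = ft (Eg w e (fout fstar (Ls ! (i - 1)) xv) g))))))"
    for d :: nat and X :: "real list set" and w :: nat and e :: "'g::finite \<Rightarrow> nat \<Rightarrow> 'g" and n :: nat
      and fstar :: "('g \<Rightarrow> real list) \<Rightarrow> nat \<Rightarrow> 'g \<Rightarrow> real" and Ls :: "nat set list" and r :: nat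
  proof (intro impI)
    assume XS: "X \<subseteq> sign_cube d" and w1: "w \<ge> 1" and e0: "\<forall>g. e g 0 = g"
      and fsv: "\<forall>xv. (\<forall>g. xv g \<in> X) \<longrightarrow> (\<forall>j<n. \<forall>g. fstar xv j g \<in> {-1, 1})"
      and r1: "r \<ge> 1" and lLs: "length Ls = r"
      and chain: "\<forall>i. Suc i < r \<longrightarrow> Ls ! i \<subseteq> Ls ! Suc i" and last: "Ls ! (r - 1) = {..<n}"
      and H0: "\<forall>j\<in>Ls ! 0. \<exists>ft. (\<forall>x\<in>sign_cube (d * w). ft x \<in> {-1, 1}) \<and>
            depends_on_at_most (d * w) K (sign_cube (d * w)) ft \<and>
            (\<forall>xv. (\<forall>g. xv g \<in> X) \<longrightarrow> (\<forall>g. fstar xv j g = ft (Eg w e xv g)))"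
      and Hi: "\<forall>i. 1 \<le> i \<longrightarrow> i < r \<longrightarrow> (\<forall>j\<in>Ls ! i. \<exists>ft.
            (\<forall>x\<in>sign_cube (w * n). ft x \<in> {-1, 1}) \<and>
            (\<exists>S. S \<subseteq> {k * n + l | k l. k < w \<and> l \<in> Ls ! (i - 1)} \<and> card S \<le> K \<and>
                 depends_only_on S (sign_cube (w * n)) ft) \<and>
            (\<forall>xv. (\<forall>g. xv g \<in> X) \<longrightarrow>
                 (\<forall>g. fstar xv j g = ft (Eg w e (fout fstar {..<n} xv) g))))"
    have LP: "list_power X w \<subseteq> sign_cube (d*w)" using XS by (rule list_power_sub)
    have C0: "\<forall>j\<in>Ls ! 0. \<exists>ft. is_PTF (d * w) K 2 3 (xi_of K) (list_power X w) ft \<and>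
            (\<forall>xv. (\<forall>g. xv g \<in> X) \<longrightarrow> (\<forall>g. fstar xv j g = ft (Eg w e xv g)))"
    proof
      fix j assume "j \<in> Ls ! 0"
      then obtain ft where f1: "\<forall>x\<in>sign_cube (d * w). ft x \<in> {-1, 1}"
        and f2: "depends_on_at_most (d * w) K (sign_cube (d * w)) ft"
        and f3: "\<forall>xv. (\<forall>g. xv g \<in> X) \<longrightarrow> (\<forall>g. fstar xv j g = ft (Eg w e xv g))"
        using H0 by blast
      have f1': "\<forall>x\<in>list_power X w. ft x \<in> {-1, 1}" using f1 LP by blast
      obtain S0 where S0: "S0 \<subseteq> {..<d*w}" "card S0 \<le> K" "depends_only_on S0 (sign_cube (d * w)) ft"
        using f2 unfolding depends_on_at_most_def by blast
      have "depends_only_on S0 (list_power X w) ft"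
        using S0(3) LP unfolding depends_only_on_def by (meson subsetD)
      then have f2': "depends_on_at_most (d * w) K (list_power X w) ft"
        unfolding depends_on_at_most_def using S0(1,2) by blast
      have "is_PTF (d * w) K 2 3 (xi_of K) (list_power X w) ft"
        by (rule part1[OF K1 LP f1' f2'])
      then show "\<exists>ft. is_PTF (d * w) K 2 3 (xi_of K) (list_power X w) ft \<and>
            (\<forall>xv. (\<forall>g. xv g \<in> X) \<longrightarrow> (\<forall>g. fstar xv j g = ft (Eg w e xv g)))"
        using f3 by blast
    qed
    have Ci: "\<forall>i. 1 \<le> i \<longrightarrow> i < r \<longrightarrow> (\<forall>j\<in>Ls ! i. \<exists>ft.
            is_PTF (card (Ls ! (i - 1)) * w) K 2 3 (xi_of K)
                   (sign_cube (card (Ls ! (i - 1)) * w)) ft \<and>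
            (\<forall>xv. (\<forall>g. xv g \<in> X) \<longrightarrow>
                 (\<forall>g. fstar xv j g = ft (Eg w e (fout fstar (Ls ! (i - 1)) xv) g))))"
    proof (intro allI impI ballI)
      fix i j assume i1: "1 \<le> i" and ir: "i < r" and jL: "j \<in> Ls ! i"
      define L where "L = Ls ! (i - 1)"
      have Ln: "L \<subseteq> {..<n}"
        using chain_sub[OF chain, of "i - 1" "r - 1"] ir last unfolding L_def by simp
      have Hij: "\<exists>ft.
            (\<forall>x\<in>sign_cube (w * n). ft x \<in> {-1, 1}) \<and>
            (\<exists>S. S \<subseteq> {k * n + l | k l. k < w \<and> l \<in> Ls ! (i - 1)} \<and> card S \<le> K \<and>
                 depends_only_on S (sign_cube (w * n)) ft) \<and>
            (\<forall>xv. (\<forall>g. xv g \<in> X) \<longrightarrow>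
                 (\<forall>g. fstar xv j g = ft (Eg w e (fout fstar {..<n} xv) g)))"
        using Hi[rule_format, OF i1 ir jL] .
      then obtain ft where f1: "\<forall>x\<in>sign_cube (w * n). ft x \<in> {-1, 1}"
        and fS: "\<exists>S. S \<subseteq> {k * n + l | k l. k < w \<and> l \<in> Ls ! (i - 1)} \<and> card S \<le> K \<and>
                 depends_only_on S (sign_cube (w * n)) ft"
        and f3: "\<forall>xv. (\<forall>g. xv g \<in> X) \<longrightarrow> (\<forall>g. fstar xv j g = ft (Eg w e (fout fstar {..<n} xv) g))"
        by blast
      from fS obtain S where SS0: "S \<subseteq> {k * n + l | k l. k < w \<and> l \<in> Ls ! (i - 1)}" and cS: "card S \<le> K"
        and dS: "depends_only_on S (sign_cube (w * n)) ft"
        by (elim exE conjE)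
      have SS: "S \<subseteq> {k * n + l | k l. k < w \<and> l \<in> L}" using SS0 unfolding L_def .
      obtain ft' where g1: "\<forall>z\<in>sign_cube (card L * w). ft' z \<in> {-1,1}"
        and g2: "depends_on_at_most (card L * w) K (sign_cube (card L * w)) ft'"
        and g3: "\<forall>z\<in>sign_cube (card L * w). \<forall>v\<in>sign_cube (w*n).
         (\<forall>k<w. \<forall>t<card L. z ! (k * card L + t) = v ! (k*n + sorted_list_of_set L ! t))
         \<longrightarrow> ft' z = ft v"
        using reindex_ptf[OF Ln f1 SS cS dS] by blast
      have ptf: "is_PTF (card L * w) K 2 3 (xi_of K) (sign_cube (card L * w)) ft'"
        by (rule part1[OF K1 subset_refl g1 g2])
      have finL: "finite L" using Ln finite_subset by blast
      have rel: "fstar xv j g = ft' (Eg w e (fout fstar L xv) g)" if xv: "\<forall>g. xv g \<in> X" for xv g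
      proof -
        define sl where "sl = sorted_list_of_set L"
        have lsl: "length sl = card L" unfolding sl_def by simp
        have ssl: "set sl = L" unfolding sl_def using finL by simp
        have fsv': "fstar xv l g' \<in> {-1,1}" if "l < n" for l g' using fsv xv that by blast
        have foL: "fout fstar L xv g' \<in> sign_cube (card L)" for g'
        proof -
          have "set (fout fstar L xv g') \<subseteq> {-1,1}"
            unfolding fout_def sl_def[symmetric] using ssl Ln fsv' by auto
          then show ?thesis unfolding sign_cube_def fout_def sl_def[symmetric] using lsl by simp
        qed
        have srt: "sorted_list_of_set {..<n} = [0..<n]" by (simp add: lessThan_atLeast0)
        have fon: "fout fstar {..<n} xv g' \<in> sign_cube n" for g'
        proof -
          have "set (fout fstar {..<n} xv g') \<subseteq> {-1,1}"
          proof (rule subsetI)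
            fix u assume "u \<in> set (fout fstar {..<n} xv g')"
            then obtain l where l: "l < n" "u = fstar xv l g'" unfolding fout_def srt by auto
            show "u \<in> {-1,1}" using fsv'[OF l(1), of g'] l(2) by simp
          qed
          then show ?thesis unfolding sign_cube_def fout_def srt by simp
        qed
        define z where "z = Eg w e (fout fstar L xv) g"
        define v where "v = Eg w e (fout fstar {..<n} xv) g"
        have zS: "z \<in> sign_cube (card L * w)" unfolding z_def
          using Eg_sign[of "fout fstar L xv" "card L" w e g] foL by (simp add: mult.commute)
        have vS: "v \<in> sign_cube (w * n)" unfolding v_def
          using Eg_sign[of "fout fstar {..<n} xv" n w e g] fon by simp
        have lenL: "\<forall>g'. length (fout fstar L xv g') = card L" using foL unfolding sign_cube_def by simp
        have lenn: "\<forall>g'. length (fout fstar {..<n} xv g') = n" using fon unfolding sign_cube_def by simp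
        have "\<forall>k<w. \<forall>t<card L. z ! (k * card L + t) = v ! (k*n + sl ! t)"
        proof (intro allI impI)
          fix k t assume kw: "k < w" and tL: "t < card L"
          have slt: "sl ! t \<in> L" using tL lsl ssl nth_mem by metis
          then have sln: "sl ! t < n" using Ln by auto
          have "z ! (k * card L + t) = fout fstar L xv (e g k) ! t"
            unfolding z_def by (rule Eg_nth[OF lenL kw tL])
          also have "\<dots> = fstar xv (sl ! t) (e g k)"
            unfolding fout_def sl_def[symmetric] using tL lsl by simp
          also have "\<dots> = fout fstar {..<n} xv (e g k) ! (sl ! t)"
            unfolding fout_def srt using sln by simp
          also have "\<dots> = v ! (k*n + sl ! t)"
            unfolding v_def by (rule Eg_nth[OF lenn kw sln, symmetric])
          finally show "z ! (k * card L + t) = v ! (k*n + sl ! t)" .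
        qed
        then have "ft' z = ft v" using g3[rule_format, OF zS vS] unfolding sl_def by simp
        moreover have "fstar xv j g = ft v" unfolding v_def using f3 xv by blast
        ultimately show ?thesis unfolding z_def by simp
      qed
      show "\<exists>ft. is_PTF (card (Ls ! (i - 1)) * w) K 2 3 (xi_of K)
                   (sign_cube (card (Ls ! (i - 1)) * w)) ft \<and>
            (\<forall>xv. (\<forall>g. xv g \<in> X) \<longrightarrow>
                 (\<forall>g. fstar xv j g = ft (Eg w e (fout fstar (Ls ! (i - 1)) xv) g)))"
      proof (rule exI[of _ ft'], rule conjI)
        show "is_PTF (card (Ls ! (i - 1)) * w) K 2 3 (xi_of K) (sign_cube (card (Ls ! (i - 1)) * w)) ft'"
          using ptf unfolding L_def .
        show "\<forall>xv. (\<forall>g. xv g \<in> X) \<longrightarrow> (\<forall>g. fstar xv j g = ft' (Eg w e (fout fstar (Ls ! (i - 1)) xv) g))"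
          using rel unfolding L_def by blast
      qed
    qed
    show "(\<forall>j\<in>Ls ! 0. \<exists>ft. is_PTF (d * w) K 2 3 (xi_of K) (list_power X w) ft \<and>
            (\<forall>xv. (\<forall>g. xv g \<in> X) \<longrightarrow> (\<forall>g. fstar xv j g = ft (Eg w e xv g))))
        \<and>
        (\<forall>i. 1 \<le> i \<longrightarrow> i < r \<longrightarrow> (\<forall>j\<in>Ls ! i. \<exists>ft.
            is_PTF (card (Ls ! (i - 1)) * w) K 2 3 (xi_of K)
                   (sign_cube (card (Ls ! (i - 1)) * w)) ft \<and>
            (\<forall>xv. (\<forall>g. xv g \<in> X) \<longrightarrow>
                 (\<forall>g. fstar xv j g = ft (Eg w e (fout fstar (Ls ! (i - 1)) xv) g)))))"
      using C0 Ci by (rule conjI)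
  qed
  show ?thesis
    apply (rule conjI[OF A])
    apply (intro allI)
    apply (rule B)
    done
qed

end
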